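(* Let $p>q>0$ be relatively prime integers with Hirzebruch–Jung continued fraction expansion $p/q=[a_1,\ldots,a_n]$, $a_i\geq 2$, and let \[ S = \sum_{i:\,a_i>3} (a_i-3). \] If $S > 2p/9$, then at most two of the $a_i$ are greater than $3$.
   Context: The Hirzebruch–Jung continued fraction $[a_1,\ldots,a_n]$ denotes $a_1 - 1/(a_2 - 1/(\cdots - 1/a_n))$; it is computed recursively by $p_1/q_1=p/q$, $p_i/q_i = a_i - q_{i+1}/p_{i+1}$ with $p_{i+1}=q_i$ and $0<q_{i+1}<p_{i+1}$. *)

theory Defs
  imports Main
begin

text \<open>Hirzebruch--Jung continued fraction expansion of p/q (p > q > 0 coprime):
  p/q = a_1 - 1/(a_2 - ... - 1/a_n).  Computed recursively: a_1 = ceiling(p/q),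
  and p/q = a_1 - q'/p' with p' = q, q' = a_1*q - p, 0 <= q' < q; stop when q' = 0.\<close>

function hj_cf :: "int \<Rightarrow> int \<Rightarrow> int list" where
  "hj_cf p q =
     (if q \<le> 0 then []
      else (let a = (p + q - 1) div q; r = a * q - p in
            if r \<le> 0 then [a] else a # hj_cf q r))"
  by pat_completeness auto
termination
proof (relation "measure (\<lambda>(p, q). nat q)")
  fix p q a r :: int
  assume q: "\<not> q \<le> 0" and a: "a = (p + q - 1) div q" and r: "r = a * q - p"
  have "q * ((p + q - 1) div q) = (p + q - 1) - (p + q - 1) mod q"
    by (simp add: minus_mod_eq_mult_div)
  moreover have "(p + q - 1) mod q \<ge> 0" using q by simp
  ultimately have "q * ((p + q - 1) div q) \<le> p + q - 1" by linarith
  hence "a * q - p < q" using a by (simp add: mult.commute)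
  thus "((q, r), p, q) \<in> measure (\<lambda>(p, q). nat q)" using q r by simp
qed simp

end

theory Submission
  imports Defs
begin

lemma hj_prod_le:
  "q > 0 \<Longrightarrow> p > q \<Longrightarrow> prod_list (map (\<lambda>a. a - 1) (filter (\<lambda>a. a > 3) (hj_cf p q))) \<le> p"
proof (induction p q rule: hj_cf.induct)
  case (1 p q)
  define a where "a = (p + q - 1) div q"
  define r where "r = a * q - p"
  have qa: "q * a \<le> p + q - 1" unfolding a_def
    by (metis "1.prems"(1) add.commute add_diff_eq div_mod_decomp_int mult.commute
        le_add_same_cancel2 pos_mod_sign)
  have qa2: "q * a > p - 1" unfolding a_def
    using "1.prems"(1) pos_mod_bound[of q "p + q - 1"] div_mod_decomp_int[of "p+q-1" q]
    by (smt (verit, ccfv_threshold) mult.commute)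
  have rlt: "r < q" using qa unfolding r_def by (simp add: mult.commute)
  have rge: "r \<ge> 0" using qa2 unfolding r_def by (simp add: mult.commute)
  have a2: "a \<ge> 2"
  proof (rule ccontr)
    assume "\<not> a \<ge> 2" then have "a \<le> 1" by simp
    then have "q * a \<le> q" using "1.prems"(1) by (simp add: mult_left_le)
    then show False using qa2 "1.prems" by linarith
  qed
  show ?case
  proof (cases "r \<le> 0")
    case True
    then have eq: "hj_cf p q = [a]" using "1.prems" by (simp add: a_def r_def Let_def)
    have "p = a * q" using True rge r_def by simp
    then have "p \<ge> a" using "1.prems"(1) a2 by (simp add: mult_le_cancel_left1)
    then show ?thesis unfolding eq using "1.prems" by simp
  next
    case False
    then have eq: "hj_cf p q = a # hj_cf q r" using "1.prems" by (simp add: a_def r_def Let_def)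
    have IH: "prod_list (map (\<lambda>a. a - 1) (filter (\<lambda>a. a > 3) (hj_cf q r))) \<le> q"
      using "1.IH"[OF _ a_def r_def] "1.prems" False rlt by simp
    let ?P = "prod_list (map (\<lambda>a. a - 1) (filter (\<lambda>a. a > 3) (hj_cf q r)))"
    show ?thesis
    proof (cases "a > 3")
      case True
      have "(a - 1) * ?P \<le> (a - 1) * q" using IH True by simp
      also have "\<dots> \<le> p" using rlt r_def by (simp add: algebra_simps)
      finally show ?thesis unfolding eq using True by simp
    next
      case F: False
      then show ?thesis unfolding eq using IH "1.prems" by simp
    qed
  qed
qed

lemma prod_pos: "\<forall>a\<in>set xs. (a::int) > 3 \<Longrightarrow> prod_list (map (\<lambda>a. a - 1) xs) \<ge> 1"
  by (induction xs) (auto, smt (verit) mult_le_cancel_right1)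

lemma arith3:
  fixes u v w :: int
  assumes "u \<ge> 1" "v \<ge> 1" "w \<ge> 1"
  shows "9 * (u + v + w) \<le> 2 * ((u + 2) * (v + 2) * (w + 2))"
proof -
  have h: "u * v \<ge> u" "v * w \<ge> v" "u * w \<ge> w" "u * v * w \<ge> 0" using assms by simp_all
  have e: "2 * ((u + 2) * (v + 2) * (w + 2)) = 2*(u*v*w) + 4*(u*v) + 4*(v*w) + 4*(u*w) + 8*u + 8*v + 8*w + 16"
    by (simp add: algebra_simps)
  show ?thesis unfolding e using h assms by (smt (verit))
qed

lemma sum_prod_bound:
  "\<forall>a\<in>set xs. (a::int) > 3 \<Longrightarrow> length xs \<ge> 3 \<Longrightarrow>
   9 * sum_list (map (\<lambda>a. a - 3) xs) \<le> 2 * prod_list (map (\<lambda>a. a - 1) xs)"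
proof (induction xs)
  case Nil
  then show ?case by simp
next
  case (Cons a xs)
  show ?case
  proof (cases "length xs \<ge> 3")
    case True
    let ?T = "sum_list (map (\<lambda>a. a - 3) xs)"
    let ?P = "prod_list (map (\<lambda>a. a - 1) xs)"
    have IH: "9 * ?T \<le> 2 * ?P" using Cons True by simp
    have P1: "?P \<ge> 1" using prod_pos Cons.prems by simp
    have a3: "a > 3" using Cons.prems by simp
    have "9 * (a - 3) \<le> 2 * (a - 2) * ?P"
    proof -
      have "9 * (a - 3) \<le> 2 * (a - 2) * 5" using a3 by simp
      also have "\<dots> \<le> 2 * (a - 2) * ?P"
      proof -
        have "?P \<ge> 27"
        proof -
          obtain b c d ys where xs: "xs = b # c # d # ys" using True
            by (metis Suc_le_length_iff numeral_3_eq_3)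
          have "b > 3" "c > 3" "d > 3" using Cons.prems xs by auto
          moreover have "prod_list (map (\<lambda>a. a - 1) ys) \<ge> 1" using prod_pos Cons.prems xs by simp
          ultimately have "(b - 1) * (c - 1) * (d - 1) * prod_list (map (\<lambda>a. a - 1) ys) \<ge> 27"
          proof -
            assume h: "b > 3" "c > 3" "d > 3" "prod_list (map (\<lambda>a. a - 1) ys) \<ge> 1"
            have "(b - 1) * (c - 1) \<ge> 9" using h mult_mono[of 3 "b-1" 3 "c-1"] by simp
            then have "(b - 1) * (c - 1) * (d - 1) \<ge> 27" using h mult_mono[of 9 "(b-1)*(c-1)" 3 "d-1"] by simp
            then show ?thesis using h mult_mono[of 27 "(b-1)*(c-1)*(d-1)" 1 "prod_list (map (\<lambda>a. a - 1) ys)"] by simp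
          qed
          then show ?thesis using xs by (simp add: mult.assoc)
        qed
        then have "(2 * (a - 2)) * 27 \<le> (2 * (a - 2)) * ?P" using a3 by (intro mult_left_mono) simp_all
        then show ?thesis using a3 by simp
      qed
      finally show ?thesis .
    qed
    then show ?thesis using IH by (simp add: algebra_simps)
  next
    case False
    then have "length xs = 2" using Cons.prems by simp
    then obtain b c where xs: "xs = [b, c]"
      by (metis One_nat_def Suc_1 length_0_conv length_Suc_conv)
    have "a > 3" "b > 3" "c > 3" using Cons.prems xs by auto
    then show ?thesis using xs arith3[of "a-3" "b-3" "c-3"] by (simp add: algebra_simps)
  qed
qed

theorem mainTheorem8:
  fixes p q :: int
  assumes "p > q" and "q > 0" and "coprime p q"
    and "(\<Sum>a\<leftarrow>filter (\<lambda>a. a > 3) (hj_cf p q). a - 3) * 9 > 2 * p"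
  shows "length (filter (\<lambda>a. a > 3) (hj_cf p q)) \<le> 2"
proof (rule ccontr)
  assume "\<not> ?thesis"
  then have "length (filter (\<lambda>a. a > 3) (hj_cf p q)) \<ge> 3" by simp
  from sum_prod_bound[OF _ this] hj_prod_le[OF assms(2,1)] assms(4)
  show False by simp
qed

end
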